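(* Assume $f$ satisfies (H1)(ii): $|f(t,u(t))-f(t,v(t))|\le(\varphi(t)-\varphi(a))^{1-\sigma}|u(t)-v(t)|$ for $t\in J$, $u,v\in\mathcal{PC}_{1-\sigma;\varphi}(J,\mathbb{R})$, and each $\mathcal{J}_k$ satisfies (H2)(i): $|\mathcal{J}_k(u(t_k^-))-\mathcal{J}_k(v(t_k^-))|\le(\varphi(t_k^-)-\varphi(a))^{1-\sigma}|u(t_k^-)-v(t_k^-)|$. Let $\tilde f:(a,T]\times\mathbb{R}\to\mathbb{R}$, $\tilde{\mathcal{J}}_k:\mathbb{R}\to\mathbb{R}$ and $v_a\in\mathbb{R}$, and suppose there are constants $\delta_a,\varepsilon_f,\varepsilon_{\mathcal{J}}>0$ with $|u_a-v_a|\le\delta_a$, $|f(t,w)-\tilde f(t,w)|\le\varepsilon_f$ for all $t\in(a,T]$, $w\in\mathbb{R}$, and $|\mathcal{J}_k(w)-\tilde{\mathcal{J}}_k(w)|\le\varepsilon_{\mathcal{J}}$ for all $w\in\mathbb{R}$, $k=1,\dots,m$. Let $u\in\mathcal{PC}_{1-\sigma;\varphi}(J,\mathbb{R})$ be a solution of (P) (with data $f,\mathcal{J}_k,u_a$) and $v\in\mathcal{PC}_{1-\sigma;\varphi}(J,\mathbb{R})$ be a solution of (P) with data $\tilde f,\tilde{\mathcal{J}}_k,v_a$. Then $$\|u-v\|_{\mathcal{PC}_{1-\sigma;\varphi}}\le\Big(\frac{\delta_a}{\Gamma(\sigma)}+\frac{m\,\varepsilon_{\mathcal{J}}}{\Ga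mma(\sigma)}+\frac{(\varphi(T)-\varphi(a))^{1-\sigma+\varrho}}{\Gamma(\varrho+1)}\varepsilon_f\Big)\mathcal{A}_{m,\varrho}.$$
   Context: Setting: $a<T$, $m\ge 1$, $a=t_0<t_1<\dots<t_m<t_{m+1}=T$, $J=[a,T]\setminus\{t_1,\dots,t_m\}$. $\varphi\in C^1([a,T],\mathbb{R})$ increasing with $\varphi'\neq0$. $0<\varrho<1$, $0\le\nu\le1$, $\sigma=\varrho+\nu-\varrho\nu$. $\mathbf{I}^{\alpha;\varphi}_{a^+}g(t)=\frac{1}{\Gamma(\alpha)}\int_a^t\varphi'(s)(\varphi(t)-\varphi(s))^{\alpha-1}g(s)\,ds$ ($\alpha>0$); $^H\mathbf{D}^{\varrho,\nu;\varphi}_{a^+}g=\mathbf{I}^{\nu(1-\varrho);\varphi}_{a^+}\big(\tfrac{1}{\varphi'(t)}\tfrac{d}{dt}\big)\mathbf{I}^{(1-\nu)(1-\varrho);\varphi}_{a^+}g$. $E_\varrho(z)=\sum_{j\ge0}z^j/\Gamma(\varrho j+1)$. $\mathcal{PC}_{1-\sigma;\varphi}(J,\mathbb{R})$: all $u:(a,T]\to\mathbb{R}$ such that $(\varphi(t)-\varphi(a))^{1-\sigma}u(t)$ is continuous on each $(t_k,t_{k+1}]$, and $\mathbf{I}^{1-\sigma;\varphi}_{a^+}u(t_k^\pm)$ exist with $\mathbf{I}^{1-\sigma;\varphi}_{a^+}u(t_k^-)=\mathbf{I}^{1-\sigma;\varphi}_{a^+}u(t_k)$; norm $\|u\|_{\mathcal{PC}_{1-\sigma;\varphi}}=\sup_{t\in(a,T]}|(\varphi(t)-\varphi(a))^{1-\sigma}u(t)|$.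 Problem (P) with data $f:(a,T]\times\mathbb{R}\to\mathbb{R}$, $\mathcal{J}_k:\mathbb{R}\to\mathbb{R}$, $u_a\in\mathbb{R}$: $^H\mathbf{D}^{\varrho,\nu;\varphi}_{a^+}u(t)=f(t,u(t))$ on $J$; $\mathbf{I}^{1-\sigma;\varphi}_{a^+}u(t_k^+)-\mathbf{I}^{1-\sigma;\varphi}_{a^+}u(t_k^-)=\mathcal{J}_k(u(t_k^-))$; $\mathbf{I}^{1-\sigma;\varphi}_{a^+}u(a)=u_a$. A solution of (P) is $u\in\mathcal{PC}_{1-\sigma;\varphi}(J,\mathbb{R})$ with $u(t)=\frac{(\varphi(t)-\varphi(a))^{\sigma-1}}{\Gamma(\sigma)}\big(u_a+\sum_{a<t_k<t}\mathcal{J}_k(u(t_k^-))\big)+\mathbf{I}^{\varrho;\varphi}_{a^+}[f(\cdot,u(\cdot))](t)$ for all $t\in(a,T]$. Constant: $\mathcal{A}_{m,\varrho}=\Big(1+\frac{1}{\Gamma(\sigma)}E_\varrho\big((\varphi(T)-\varphi(a))^{1-\sigma+\varrho}\big)\Big)^m E_\varrho\big((\varphi(T)-\varphi(a))^{1-\sigma+\varrho}\big)$. *)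

theory Defs
  imports "HOL-Analysis.Analysis"
begin

text \<open>phi-Riemann-Liouville fractional integral of order alpha (alpha > 0);
  order 0 is the identity by the usual convention.  The derivative phi' of phi
  is passed explicitly.\<close>
definition frac_int ::
  "(real \<Rightarrow> real) \<Rightarrow> (real \<Rightarrow> real) \<Rightarrow> real \<Rightarrow> real \<Rightarrow> (real \<Rightarrow> real) \<Rightarrow> real \<Rightarrow> real" where
  "frac_int \<phi> \<phi>' a \<alpha> g t =
     (if \<alpha> = 0 then g t
      else (1 / Gamma \<alpha>) * integral {a..t} (\<lambda>s. \<phi>' s * (\<phi> t - \<phi> s) powr (\<alpha> - 1) * g s))"

definition mittag_leffler :: "real \<Rightarrow> real \<Rightarrow> real" where
  "mittag_leffler \<rho> z = (\<Sum>j. z ^ j / Gamma (\<rho> * real j + 1))"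

text \<open>The space PC_{1-sigma;phi}(J,R); partition points t 0 = a < t 1 < ... < t (m+1) = T.
  Boundedness of the weighted function (finiteness of the norm) is included.\<close>
definition PC_space ::
  "(real \<Rightarrow> real) \<Rightarrow> (real \<Rightarrow> real) \<Rightarrow> real \<Rightarrow> real \<Rightarrow> (nat \<Rightarrow> real) \<Rightarrow> nat \<Rightarrow> real
   \<Rightarrow> (real \<Rightarrow> real) set" where
  "PC_space \<phi> \<phi>' a T t m \<sigma> =
    {u. (\<forall>k\<le>m. continuous_on {t k<..t (Suc k)} (\<lambda>s. (\<phi> s - \<phi> a) powr (1 - \<sigma>) * u s))
      \<and> bounded ((\<lambda>s. (\<phi> s - \<phi> a) powr (1 - \<sigma>) * u s) ` {a<..T})
      \<and> (\<forall>k\<in>{1..m}.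
           ((frac_int \<phi> \<phi>' a (1 - \<sigma>) u \<longlongrightarrow> frac_int \<phi> \<phi>' a (1 - \<sigma>) u (t k)) (at_left (t k)))
         \<and> (\<exists>L. (frac_int \<phi> \<phi>' a (1 - \<sigma>) u \<longlongrightarrow> L) (at_right (t k))))}"

definition PC_norm :: "(real \<Rightarrow> real) \<Rightarrow> real \<Rightarrow> real \<Rightarrow> real \<Rightarrow> (real \<Rightarrow> real) \<Rightarrow> real" where
  "PC_norm \<phi> a T \<sigma> u = (SUP s\<in>{a<..T}. \<bar>(\<phi> s - \<phi> a) powr (1 - \<sigma>) * u s\<bar>)"

text \<open>Solution of problem (P) with data f, Jk, ua (given as the integral equation);
  the fractional integral of f(.,u(.)) is required to exist.\<close>
definition is_solution ::
  "(real \<Rightarrow> real) \<Rightarrow> (real \<Rightarrow> real) \<Rightarrow> real \<Rightarrow> real \<Rightarrow> (nat \<Rightarrow> real) \<Rightarrow> nat \<Rightarrow> real \<Rightarrow> real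
   \<Rightarrow> (real \<Rightarrow> real \<Rightarrow> real) \<Rightarrow> (nat \<Rightarrow> real \<Rightarrow> real) \<Rightarrow> real \<Rightarrow> (real \<Rightarrow> real) \<Rightarrow> bool" where
  "is_solution \<phi> \<phi>' a T t m \<sigma> \<rho> f Jk ua u \<longleftrightarrow>
     u \<in> PC_space \<phi> \<phi>' a T t m \<sigma>
   \<and> (\<forall>s\<in>{a<..T}. (\<lambda>r. \<phi>' r * (\<phi> s - \<phi> r) powr (\<rho> - 1) * f r (u r)) integrable_on {a..s})
   \<and> (\<forall>s\<in>{a<..T}. u s =
        (\<phi> s - \<phi> a) powr (\<sigma> - 1) / Gamma \<sigma>
          * (ua + (\<Sum>k\<in>{k\<in>{1..m}. t k < s}. Jk k (Lim (at_left (t k)) u)))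
        + frac_int \<phi> \<phi>' a \<rho> (\<lambda>r. f r (u r)) s)"

end

theory Submission
  imports Defs
begin


lemma beta_scaled:
  fixes p q \<alpha> b :: real
  assumes pq: "p < q" and \<alpha>: "\<alpha> > 0" and b: "b > 0"
  shows "((\<lambda>x. (x - p) powr (\<alpha> - 1) * (q - x) powr (b - 1)) has_integral
           (q - p) powr (\<alpha> + b - 1) * Beta \<alpha> b) {p..q}"
proof -
  define L where "L = q - p"
  have L: "L > 0" using pq by (simp add: L_def)
  define h where "h = (\<lambda>t::real. t powr (\<alpha> - 1) * (1 - t) powr (b - 1))"
  have hB: "(h has_integral Beta \<alpha> b) (cbox 0 1)"
    using has_integral_Beta_real[OF \<alpha> b] by (simp add: h_def)
  from has_integral_affinity[OF hB, of "1/L" "-p/L"] L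
  have 1: "((\<lambda>x. h ((1/L) * x + - p / L)) has_integral L * Beta \<alpha> b)
            ((\<lambda>x. L * x + p) ` cbox 0 1)"
    by simp
  have img: "(\<lambda>x. L * x + p) ` cbox 0 1 = {p..q}"
  proof
    show "(\<lambda>x. L * x + p) ` cbox 0 1 \<subseteq> {p..q}"
    proof (rule image_subsetI)
      fix x :: real assume "x \<in> cbox 0 1"
      hence x: "0 \<le> x" "x \<le> 1" by auto
      have "L * x \<le> L * 1" using L x by (intro mult_left_mono) auto
      moreover have "0 \<le> L * x" using L x by simp
      ultimately show "L * x + p \<in> {p..q}" using L_def by auto
    qed
    show "{p..q} \<subseteq> (\<lambda>x. L * x + p) ` cbox 0 1"
    proof
      fix x assume x: "x \<in> {p..q}"
      show "x \<in> (\<lambda>x. L * x + p) ` cbox 0 1"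
        using x L by (intro image_eqI[of _ _ "(x - p)/L"]) (auto simp: L_def field_simps)
    qed
  qed
  have 2: "((\<lambda>x. L powr (\<alpha> + b - 2) * h ((1/L) * x + - p / L)) has_integral
             L powr (\<alpha> + b - 2) * (L * Beta \<alpha> b)) {p..q}"
    using has_integral_mult_right[OF 1[unfolded img]] by simp
  have 3: "((\<lambda>x. (x - p) powr (\<alpha> - 1) * (q - x) powr (b - 1)) has_integral
             L powr (\<alpha> + b - 2) * (L * Beta \<alpha> b)) {p..q}"
  proof (rule has_integral_spike_finite[OF _ _ 2, of "{}"])
    show "finite {}" by simp
    fix x assume x: "x \<in> {p..q} - {}"
    have e1: "(1/L) * x + - p / L = (x - p) / L" by (simp add: diff_divide_distrib)
    have e2: "1 - (x - p) / L = (q - x) / L" using L by (simp add: L_def field_simps)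
    have "L powr (\<alpha> + b - 2) * h ((1/L) * x + - p / L)
        = L powr (\<alpha> + b - 2) * (((x - p) powr (\<alpha> - 1) / L powr (\<alpha> - 1)) * ((q - x) powr (b - 1) / L powr (b - 1)))"
    proof -
      have "h ((1/L) * x + - p / L) = ((x - p) / L) powr (\<alpha> - 1) * ((q - x) / L) powr (b - 1)"
        unfolding h_def e1 e2 ..
      also have "\<dots> = ((x - p) powr (\<alpha> - 1) / L powr (\<alpha> - 1)) * ((q - x) powr (b - 1) / L powr (b - 1))"
        using x L by (simp add: powr_divide)
      finally show ?thesis by simp
    qed
    also have "\<dots> = (x - p) powr (\<alpha> - 1) * (q - x) powr (b - 1) * (L powr (\<alpha> + b - 2) / (L powr (\<alpha> - 1) * L powr (b - 1)))"
      by (simp add: field_simps)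
    also have "L powr (\<alpha> - 1) * L powr (b - 1) = L powr (\<alpha> + b - 2)"
      by (simp add: powr_add[symmetric])
    finally show "(x - p) powr (\<alpha> - 1) * (q - x) powr (b - 1) = L powr (\<alpha> + b - 2) * h ((1/L) * x + - p / L)"
      using L by simp
  qed
  have "L powr (\<alpha> + b - 2) * (L * Beta \<alpha> b) = (L powr (\<alpha> + b - 2) * L powr 1) * Beta \<alpha> b"
    using L by simp
  also have "L powr (\<alpha> + b - 2) * L powr 1 = L powr (\<alpha> + b - 2 + 1)"
    by (rule powr_add[symmetric])
  also have "\<alpha> + b - 2 + 1 = \<alpha> + b - 1" by simp
  finally have eq: "L powr (\<alpha> + b - 2) * (L * Beta \<alpha> b) = L powr (\<alpha> + b - 1) * Beta \<alpha> b" .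
  show ?thesis using 3 unfolding eq unfolding L_def .
qed
lemma frac_pow:
  fixes \<phi> \<phi>' :: "real \<Rightarrow> real" and a s \<rho> \<beta> :: real
  assumes as: "a < s"
    and der: "\<And>x. x \<in> {a..s} \<Longrightarrow> (\<phi> has_real_derivative \<phi>' x) (at x within {a..s})"
    and pos: "\<And>x. x \<in> {a..s} \<Longrightarrow> \<phi>' x > 0"
    and sm: "strict_mono_on {a..s} \<phi>"
    and \<rho>: "\<rho> > 0" and \<beta>: "\<beta> \<ge> 0"
  shows "((\<lambda>r. \<phi>' r * (\<phi> s - \<phi> r) powr (\<rho> - 1) * (\<phi> r - \<phi> a) powr \<beta>) has_integral
           (Beta (\<beta> + 1) \<rho> * (\<phi> s - \<phi> a) powr (\<rho> + \<beta>))) {a..s}"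
proof -
  define f where "f = (\<lambda>x. (\<phi> s - x) powr (\<rho> - 1) * (x - \<phi> a) powr \<beta>)"
  define V where "V = Beta (\<beta> + 1) \<rho> * (\<phi> s - \<phi> a) powr (\<rho> + \<beta>)"
  have cont: "continuous_on {a..s} \<phi>"
    using der by (meson DERIV_continuous continuous_at_imp_continuous_on continuous_on_eq_continuous_within)
  have ltas: "\<phi> a < \<phi> s" using sm as by (auto simp: strict_mono_on_def)
  have img: "\<phi> ` {a..s} = {\<phi> a..\<phi> s}"
  proof
    show "\<phi> ` {a..s} \<subseteq> {\<phi> a..\<phi> s}"
    proof (rule image_subsetI)
      fix x assume x: "x \<in> {a..s}"
      have "a = x \<or> a < x" "x = s \<or> x < s" using x by auto
      thus "\<phi> x \<in> {\<phi> a..\<phi> s}"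
        using sm x as unfolding strict_mono_on_def by (auto intro: less_imp_le)
    qed
    show "{\<phi> a..\<phi> s} \<subseteq> \<phi> ` {a..s}"
    proof
      fix y assume "y \<in> {\<phi> a..\<phi> s}"
      then obtain x where "x \<ge> a" "x \<le> s" "\<phi> x = y"
        using IVT'[of \<phi> a y s] cont as by auto
      thus "y \<in> \<phi> ` {a..s}" by auto
    qed
  qed
  have bs: "((\<lambda>x. (x - \<phi> a) powr (\<beta> + 1 - 1) * (\<phi> s - x) powr (\<rho> - 1)) has_integral
           (\<phi> s - \<phi> a) powr (\<beta> + 1 + \<rho> - 1) * Beta (\<beta> + 1) \<rho>) {\<phi> a..\<phi> s}"
    by (rule beta_scaled) (use ltas \<rho> \<beta> in auto)
  have fI: "(f has_integral V) {\<phi> a..\<phi> s}"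
    using bs by (simp add: f_def V_def mult.commute add.commute)
  have fA: "f absolutely_integrable_on (\<phi> ` {a..s})"
    unfolding img
    by (rule nonnegative_absolutely_integrable_1) (use fI in \<open>auto simp: f_def\<close>)
  have "(\<lambda>x. \<bar>\<phi>' x\<bar> * f (\<phi> x)) absolutely_integrable_on {a..s} \<and>
           integral {a..s} (\<lambda>x. \<bar>\<phi>' x\<bar> * f (\<phi> x)) = V"
    by (subst has_absolute_integral_change_of_variables_1'[OF _ der])
       (use fA fI img sm in \<open>auto intro: strict_mono_on_imp_inj_on\<close>)
  hence absI: "((\<lambda>x. \<bar>\<phi>' x\<bar> * f (\<phi> x)) has_integral V) {a..s}"
    using absolutely_integrable_on_def has_integral_integrable_integral by blast
  have "((\<lambda>x. \<phi>' x * f (\<phi> x)) has_integral V) {a..s}"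
    by (rule has_integral_spike_finite[of "{}", OF _ _ absI]) (use pos in \<open>auto simp: less_imp_le\<close>)
  thus ?thesis by (simp add: f_def V_def mult.assoc)
qed

lemma Gamma_real_mono_le: "3/2 \<le> x \<Longrightarrow> x \<le> y \<Longrightarrow> Gamma (x::real) \<le> Gamma y"
proof (cases "x = y")
  case False
  assume "3/2 \<le> x" "x \<le> y"
  with False have "x < y" by simp
  from Gamma_real_strict_mono[OF \<open>3/2 \<le> x\<close> this] show ?thesis by simp
qed simp

lemma ml_summable:
  fixes \<rho> X :: real
  assumes \<rho>: "\<rho> > 0" and X: "X \<ge> 0"
  shows "summable (\<lambda>j. X ^ j / Gamma (\<rho> * real j + 1))"
proof -
  define W where "W = max 1 (X powr (1/\<rho>))"
  have W1: "W \<ge> 1" by (simp add: W_def)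
  have "summable (\<lambda>n. inverse (fact n) * (2*W) ^ n)" by (rule summable_exp)
  hence "convergent (\<lambda>n. inverse (fact n) * (2*W) ^ n)"
    using summable_LIMSEQ_zero convergent_def by blast
  then obtain C where C: "C > 0" "\<And>n. norm (inverse (fact n) * (2*W) ^ n) \<le> C"
  proof -
    have "Bseq (\<lambda>n. inverse (fact n) * (2*W) ^ n)" by (rule convergent_imp_Bseq) fact
    thus ?thesis using that unfolding Bseq_def by blast
  qed
  define q where "q = (1/2::real) powr \<rho>"
  have q: "0 \<le> q" "q < 1" using \<rho> by (auto simp: q_def powr_divide)
  define N where "N = nat \<lceil>1/\<rho>\<rceil>"
  show ?thesis
  proof (rule summable_comparison_test'[of "\<lambda>j. (2 * W * C) * q ^ j" N])
    show "summable (\<lambda>j. 2 * W * C * q ^ j)"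
      using q by (intro summable_mult summable_geometric) auto
  next
    fix j assume jN: "N \<le> j"
    have rj1: "\<rho> * real j \<ge> 1"
    proof -
      have "real j \<ge> 1/\<rho>" using jN unfolding N_def by linarith
      thus ?thesis using \<rho> by (simp add: field_simps)
    qed
    define n where "n = nat \<lfloor>\<rho> * real j\<rfloor>"
    have n1: "real n \<le> \<rho> * real j" "\<rho> * real j < real n + 1" "n \<ge> 1"
      using rj1 unfolding n_def by linarith+
    have G: "fact n \<le> Gamma (\<rho> * real j + 1)"
    proof -
      have "Gamma (1 + real n) \<le> Gamma (\<rho> * real j + 1)"
        by (rule Gamma_real_mono_le) (use n1 in auto)
      thus ?thesis by (simp add: Gamma_fact)
    qed
    have fpos: "(0::real) < fact n" by simp
    have Xj: "X ^ j \<le> W ^ (n + 1)"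
    proof (cases "X = 0")
      case True
      have "j \<noteq> 0" using rj1 by (cases j) auto
      thus ?thesis using True W1 by (simp add: zero_power)
    next
      case False
      hence Xp: "X > 0" using X by simp
      have "X ^ j = X powr (real j)" using Xp by (simp add: powr_realpow)
      also have "\<dots> = (X powr (1/\<rho>)) powr (\<rho> * real j)"
        using \<rho> by (simp add: powr_powr)
      also have "\<dots> \<le> W powr (\<rho> * real j)"
        by (rule powr_mono2) (use \<rho> in \<open>auto simp: W_def\<close>)
      also have "\<dots> \<le> W powr (real (n + 1))"
        by (rule powr_mono) (use n1 W1 in auto)
      also have "\<dots> = W ^ (n + 1)" using W1 by (subst powr_realpow) auto
      finally show ?thesis .
    qed
    have "norm (X ^ j / Gamma (\<rho> * real j + 1)) = X ^ j / Gamma (\<rho> * real j + 1)"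
    proof -
      have "Gamma (\<rho> * real j + 1) > 0" using rj1 by (intro Gamma_real_pos) linarith
      thus ?thesis using X by simp
    qed
    also have "\<dots> \<le> W ^ (n + 1) / fact n"
      by (rule frac_le) (use Xj G X W1 zero_le_power[of W "n+1"] in auto)
    also have "\<dots> = W * (inverse (fact n) * (2*W) ^ n) * (1/2) ^ n"
      by (simp add: power_mult_distrib field_simps)
    also have "\<dots> \<le> W * C * (1/2) ^ n"
      using C(2)[of n] W1 by (intro mult_right_mono mult_left_mono) auto
    also have "(1/2::real) ^ n \<le> 2 * q ^ j"
    proof -
      have "(1/2::real) ^ n = (1/2) powr (real n)" by (simp add: powr_realpow)
      also have "\<dots> \<le> (1/2) powr (\<rho> * real j - 1)"
        by (rule powr_mono') (use n1 in auto)
      also have "\<dots> = 2 * (1/2) powr (\<rho> * real j)"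
        by (simp add: powr_diff powr_minus_divide)
      also have "(1/2::real) powr (\<rho> * real j) = q ^ j"
        by (simp add: q_def powr_powr[symmetric] powr_realpow)
      finally show ?thesis .
    qed
    hence "W * C * (1/2) ^ n \<le> W * C * (2 * q ^ j)"
      using W1 C by (intro mult_left_mono) auto
    finally show "norm (X ^ j / Gamma (\<rho> * real j + 1)) \<le> 2 * W * C * q ^ j"
      by (simp add: mult_ac)
  qed
qed
lemma gronwall_frac:
  fixes \<phi> \<phi>' y :: "real \<Rightarrow> real" and a b \<rho> G A M :: real
  assumes ab: "a < b"
    and der: "\<And>x. x \<in> {a..b} \<Longrightarrow> (\<phi> has_real_derivative \<phi>' x) (at x within {a..b})"
    and pos: "\<And>x. x \<in> {a..b} \<Longrightarrow> \<phi>' x > 0"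
    and sm: "strict_mono_on {a..b} \<phi>"
    and \<rho>: "\<rho> > 0" and G: "G \<ge> 0" and A: "A \<ge> 0"
    and y0: "y a = 0"
    and ybd: "\<And>r. r \<in> {a<..b} \<Longrightarrow> 0 \<le> y r \<and> y r \<le> M"
    and yint: "\<And>s. s \<in> {a<..b} \<Longrightarrow> (\<lambda>r. \<phi>' r * (\<phi> s - \<phi> r) powr (\<rho> - 1) * y r) integrable_on {a..s}"
    and ineq: "\<And>s. s \<in> {a<..b} \<Longrightarrow>
        y s \<le> A + G / Gamma \<rho> * integral {a..s} (\<lambda>r. \<phi>' r * (\<phi> s - \<phi> r) powr (\<rho> - 1) * y r)"
    and s: "s \<in> {a<..b}"
  shows "y s \<le> A * (\<Sum>j. (G * (\<phi> b - \<phi> a) powr \<rho>) ^ j / Gamma (\<rho> * real j + 1))"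
proof -
  define e where "e = (\<lambda>j r. (\<phi> r - \<phi> a) powr (\<rho> * real j))"
  define c where "c = (\<lambda>j::nat. G ^ j / Gamma (\<rho> * real j + 1))"
  define B where "B = (\<lambda>n r. A * (\<Sum>j<n. c j * e j r) + M * c n * e n r)"
  define K where "K = (\<lambda>s r. \<phi>' r * (\<phi> s - \<phi> r) powr (\<rho> - 1))"
  have M: "M \<ge> 0" using ybd[of b] ab by auto
  have Gpos: "Gamma \<rho> > 0" using \<rho> by simp
  have Gj: "Gamma (\<rho> * real j + 1) > 0" for j
  proof -
    have "\<rho> * real j \<ge> 0" using \<rho> by simp
    thus ?thesis by (intro Gamma_real_pos) linarith
  qed
  have cnn: "c j \<ge> 0" for j using G Gj[of j] by (simp add: c_def)
  have enn: "e j r \<ge> 0" for j r by (simp add: e_def)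
  have ea: "e j a = 0" for j by (simp add: e_def)
  have Lpos: "\<phi> r - \<phi> a > 0" if "r \<in> {a<..b}" for r
    using sm that ab by (auto simp: strict_mono_on_def)
  have Knn: "K s r \<ge> 0" if "r \<in> {a..b}" for s r
    using pos[OF that] by (simp add: K_def)
  have Ke: "((\<lambda>r. K s r * e j r) has_integral
              Beta (\<rho> * real j + 1) \<rho> * (\<phi> s - \<phi> a) powr (\<rho> + \<rho> * real j)) {a..s}"
    if s: "s \<in> {a<..b}" for s j
  proof -
    have "((\<lambda>r. \<phi>' r * (\<phi> s - \<phi> r) powr (\<rho> - 1) * (\<phi> r - \<phi> a) powr (\<rho> * real j)) has_integral
           (Beta (\<rho> * real j + 1) \<rho> * (\<phi> s - \<phi> a) powr (\<rho> + \<rho> * real j))) {a..s}"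
    proof (rule frac_pow)
      show "a < s" using s by simp
      fix x assume x: "x \<in> {a..s}"
      hence xb: "x \<in> {a..b}" using s by auto
      show "(\<phi> has_real_derivative \<phi>' x) (at x within {a..s})"
        by (rule DERIV_subset[OF der[OF xb]]) (use s in auto)
      show "\<phi>' x > 0" using pos[OF xb] .
    next
      show "strict_mono_on {a..s} \<phi>"
        using sm s unfolding strict_mono_on_def by auto
    qed (use \<rho> in auto)
    thus ?thesis by (simp add: K_def e_def)
  qed
  have step: "G / Gamma \<rho> * (c j * (Beta (\<rho> * real j + 1) \<rho> * (\<phi> s - \<phi> a) powr (\<rho> + \<rho> * real j)))
                = c (Suc j) * e (Suc j) s" for s j
  proof -
    have g1: "Gamma (\<rho> * real j + 1) > 0" by (rule Gj)
    have eq: "\<rho> * real j + 1 + \<rho> = \<rho> * real (Suc j) + 1" by (simp add: algebra_simps)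
    have "Beta (\<rho> * real j + 1) \<rho> = Gamma (\<rho> * real j + 1) * Gamma \<rho> / Gamma (\<rho> * real (Suc j) + 1)"
      unfolding Beta_def eq ..
    moreover have "\<rho> + \<rho> * real j = \<rho> * real (Suc j)" by (simp add: algebra_simps)
    ultimately show ?thesis
      using g1 Gpos by (simp add: c_def e_def)
  qed
  have main: "\<forall>r\<in>{a..b}. y r \<le> B n r" for n
  proof (induction n)
    case 0
    show ?case
    proof
      fix r assume r: "r \<in> {a..b}"
      show "y r \<le> B 0 r"
      proof (cases "r = a")
        case True thus ?thesis using y0 ea by (simp add: B_def)
      next
        case False
        hence r': "r \<in> {a<..b}" using r by auto
        have "e 0 r = 1" using Lpos[OF r'] by (simp add: e_def)
        moreover have "c 0 = 1" by (simp add: c_def)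
        ultimately show ?thesis using ybd[OF r'] by (simp add: B_def)
      qed
    qed
  next
    case (Suc n)
    show ?case
    proof
      fix r assume r: "r \<in> {a..b}"
      show "y r \<le> B (Suc n) r"
      proof (cases "r = a")
        case True thus ?thesis using y0 ea by (simp add: B_def)
      next
        case False
        hence r': "r \<in> {a<..b}" using r by auto
        define I where "I = (\<lambda>j. Beta (\<rho> * real j + 1) \<rho> * (\<phi> r - \<phi> a) powr (\<rho> + \<rho> * real j))"
        have KB: "((\<lambda>x. K r x * B n x) has_integral
                    A * (\<Sum>j<n. c j * I j) + M * c n * I n) {a..r}"
        proof -
          have "((\<lambda>x. A * (\<Sum>j<n. c j * (K r x * e j x)) + M * c n * (K r x * e n x)) has_integral
                    A * (\<Sum>j<n. c j * I j) + M * c n * I n) {a..r}"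
            unfolding I_def
            by (intro has_integral_add has_integral_mult_right has_integral_sum Ke r') auto
          moreover have "(\<lambda>x. A * (\<Sum>j<n. c j * (K r x * e j x)) + M * c n * (K r x * e n x))
                        = (\<lambda>x. K r x * B n x)"
            by (auto simp: B_def sum_distrib_left sum_distrib_right mult.assoc mult.left_commute distrib_left)
          ultimately show ?thesis by simp
        qed
        have "y r \<le> A + G / Gamma \<rho> * integral {a..r} (\<lambda>x. K r x * y x)"
          using ineq[OF r'] by (simp add: K_def)
        also have "integral {a..r} (\<lambda>x. K r x * y x) \<le> integral {a..r} (\<lambda>x. K r x * B n x)"
        proof (rule integral_le)
          show "(\<lambda>x. K r x * y x) integrable_on {a..r}" using yint[OF r'] by (simp add: K_def)
          show "(\<lambda>x. K r x * B n x) integrable_on {a..r}" using KB by blast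
          fix x assume x: "x \<in> {a..r}"
          hence xb: "x \<in> {a..b}" using r' by auto
          show "K r x * y x \<le> K r x * B n x"
            by (rule mult_left_mono) (use Suc.IH xb Knn[OF xb] in auto)
        qed
        hence "A + G / Gamma \<rho> * integral {a..r} (\<lambda>x. K r x * y x)
               \<le> A + G / Gamma \<rho> * integral {a..r} (\<lambda>x. K r x * B n x)"
          using G Gpos by (intro add_left_mono mult_left_mono) auto
        also have "integral {a..r} (\<lambda>x. K r x * B n x) = A * (\<Sum>j<n. c j * I j) + M * c n * I n"
          using KB by blast
        also have "A + G / Gamma \<rho> * (A * (\<Sum>j<n. c j * I j) + M * c n * I n) = B (Suc n) r"
        proof -
          have "G / Gamma \<rho> * (c j * I j) = c (Suc j) * e (Suc j) r" for j
            using step[of j r] by (simp add: I_def)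
          hence 1: "G / Gamma \<rho> * (A * (\<Sum>j<n. c j * I j)) = A * (\<Sum>j<n. c (Suc j) * e (Suc j) r)"
            by (simp add: sum_distrib_left algebra_simps)
          have 2: "G / Gamma \<rho> * (M * c n * I n) = M * c (Suc n) * e (Suc n) r"
            using step[of n r] by (simp add: I_def algebra_simps)
          have "e 0 r = 1" using Lpos[OF r'] by (simp add: e_def)
          moreover have "c 0 = 1" by (simp add: c_def)
          ultimately have 3: "(\<Sum>j<Suc n. c j * e j r) = 1 + (\<Sum>j<n. c (Suc j) * e (Suc j) r)"
            unfolding sum.lessThan_Suc_shift by simp
          have "A + G / Gamma \<rho> * (A * (\<Sum>j<n. c j * I j) + M * c n * I n)
              = A + G / Gamma \<rho> * (A * (\<Sum>j<n. c j * I j)) + G / Gamma \<rho> * (M * c n * I n)"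
            by (simp add: distrib_left)
          also have "\<dots> = A * (1 + (\<Sum>j<n. c (Suc j) * e (Suc j) r)) + M * c (Suc n) * e (Suc n) r"
            unfolding 1 2 by (simp add: distrib_left)
          also have "\<dots> = B (Suc n) r" unfolding B_def 3 ..
          finally show ?thesis .
        qed
        finally show ?thesis .
      qed
    qed
  qed
  define Z where "Z = G * (\<phi> b - \<phi> a) powr \<rho>"
  have Z: "Z \<ge> 0" using G by (simp add: Z_def)
  define T where "T = (\<lambda>j. Z ^ j / Gamma (\<rho> * real j + 1))"
  have sT: "summable T" unfolding T_def by (rule ml_summable[OF \<rho> Z])
  have Tnn: "T j \<ge> 0" for j using Gj[of j] Z by (simp add: T_def)
  have ceT: "c j * e j s \<le> T j" for j
  proof -
    have Ls: "\<phi> s - \<phi> a \<le> \<phi> b - \<phi> a"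
      using sm s ab by (cases "s = b") (auto simp: strict_mono_on_def less_imp_le)
    have "e j s \<le> (\<phi> b - \<phi> a) powr (\<rho> * real j)"
      unfolding e_def by (rule powr_mono2) (use Lpos[OF s] \<rho> Ls in auto)
    also have "\<dots> = ((\<phi> b - \<phi> a) powr \<rho>) ^ j"
      using Lpos[of b] ab by (simp add: powr_powr[symmetric] powr_realpow)
    finally have "c j * e j s \<le> c j * ((\<phi> b - \<phi> a) powr \<rho>) ^ j"
      using cnn by (intro mult_left_mono) auto
    also have "\<dots> = T j" by (simp add: c_def T_def Z_def power_mult_distrib)
    finally show ?thesis .
  qed
  have bnd: "y s \<le> A * suminf T + M * T n" for n
  proof -
    have "y s \<le> B n s" using main[of n] s by auto
    also have "\<dots> \<le> A * (\<Sum>j<n. T j) + M * T n"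
      unfolding B_def using A M cnn
      by (intro add_mono mult_left_mono sum_mono ceT) (auto simp: mult.assoc intro: mult_left_mono ceT)
    also have "(\<Sum>j<n. T j) \<le> suminf T"
      by (rule sum_le_suminf[OF sT]) (auto simp: Tnn)
    hence "A * (\<Sum>j<n. T j) + M * T n \<le> A * suminf T + M * T n"
      using A by (intro add_right_mono mult_left_mono) auto
    finally show ?thesis .
  qed
  have "(\<lambda>n. A * suminf T + M * T n) \<longlonglongrightarrow> A * suminf T + M * 0"
    by (intro tendsto_intros summable_LIMSEQ_zero[OF sT])
  hence "y s \<le> A * suminf T"
    using bnd by (intro LIMSEQ_le_const) auto
  thus ?thesis by (simp add: T_def Z_def)
qed

lemma phi_props:
  fixes \<phi> \<phi>' :: "real \<Rightarrow> real" and a T :: real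
  assumes aT: "a < T"
    and der: "\<forall>s\<in>{a..T}. (\<phi> has_real_derivative \<phi>' s) (at s within {a..T})"
    and cd: "continuous_on {a..T} \<phi>'"
    and mono: "mono_on {a..T} \<phi>"
    and nz: "\<forall>s\<in>{a..T}. \<phi>' s \<noteq> 0"
  shows "(\<forall>x\<in>{a..T}. \<phi>' x > 0) \<and> strict_mono_on {a..T} \<phi> \<and> continuous_on {a..T} \<phi>"
proof -
  have cont: "continuous_on {a..T} \<phi>" using der by (intro DERIV_continuous_on) auto
  have derat: "(\<phi> has_real_derivative \<phi>' x) (at x)" if "a < x" "x < T" for x
  proof -
    have "x \<in> interior {a..T}" using that by simp
    thus ?thesis using der that by (metis at_within_interior atLeastAtMost_iff less_imp_le)
  qed
  have intpos: "\<phi>' x > 0" if x: "a < x" "x < T" for x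
  proof (rule ccontr)
    assume "\<not> \<phi>' x > 0"
    moreover have "\<phi>' x \<noteq> 0" using nz x by auto
    ultimately have neg: "\<phi>' x < 0" by linarith
    obtain d where d: "d > 0" "\<And>h. h > 0 \<Longrightarrow> h < d \<Longrightarrow> \<phi> (x + h) < \<phi> x"
      using DERIV_neg_dec_right[OF derat[OF x] neg] by blast
    define \<mu> where "\<mu> = min d (T - x)"
    define h where "h = \<mu> / 2"
    have mm: "\<mu> \<le> T - x" "\<mu> \<le> d" "\<mu> > 0" using d x by (auto simp: \<mu>_def)
    have h1: "h > 0" using mm unfolding h_def by linarith
    have h2: "h < d" using mm unfolding h_def by linarith
    have h3: "x + h \<le> T" using mm unfolding h_def by linarith
    note h = h1 h2 h3
    have "\<phi> x \<le> \<phi> (x + h)" using mono h x unfolding mono_on_def by auto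
    with d(2)[OF h(1,2)] show False by simp
  qed
  define m where "m = (a + T) / 2"
  have m: "a < m" "m < T" using aT by (auto simp: m_def)
  have pos: "\<phi>' x > 0" if x: "x \<in> {a..T}" for x
  proof (rule ccontr)
    assume "\<not> \<phi>' x > 0"
    moreover have "\<phi>' x \<noteq> 0" using nz x by auto
    ultimately have neg: "\<phi>' x < 0" by linarith
    have pm: "\<phi>' m > 0" using intpos m by simp
    show False
    proof (cases "x \<le> m")
      case True
      obtain z where "z \<ge> x" "z \<le> m" "\<phi>' z = 0"
        using IVT'[of \<phi>' x 0 m] neg pm True continuous_on_subset[OF cd, of "{x..m}"] x m by auto
      thus False using nz x m by auto
    next
      case False
      obtain z where "z \<ge> m" "z \<le> x" "\<phi>' z = 0"
        using IVT2'[of \<phi>' x 0 m] neg pm False continuous_on_subset[OF cd, of "{m..x}"] x m by auto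
      thus False using nz x m by auto
    qed
  qed
  have sm: "strict_mono_on {a..T} \<phi>"
  proof (rule strict_mono_onI)
    fix r s assume rs: "r \<in> {a..T}" "s \<in> {a..T}" "r < s"
    show "\<phi> r < \<phi> s"
    proof (rule DERIV_pos_imp_increasing_open[OF rs(3)])
      fix x assume "r < x" "x < s"
      hence "a < x" "x < T" using rs by auto
      thus "\<exists>y. (\<phi> has_real_derivative y) (at x) \<and> 0 < y"
        using derat intpos by blast
    next
      show "continuous_on {r..s} \<phi>" by (rule continuous_on_subset[OF cont]) (use rs in auto)
    qed
  qed
  show ?thesis using pos sm cont by blast
qed

lemma t_strict:
  fixes t :: "nat \<Rightarrow> real"
  assumes inc: "\<forall>k\<le>m. t k < t (Suc k)" and ij: "i < j" and jm: "j \<le> Suc m"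
  shows "t i < t j"
  using ij jm
proof (induction j)
  case 0 thus ?case by simp
next
  case (Suc j)
  have "t j < t (Suc j)" using inc Suc.prems by auto
  moreover have "t i \<le> t j" using Suc by (cases "i = j") auto
  ultimately show ?case by simp
qed

lemma t_mono:
  fixes t :: "nat \<Rightarrow> real"
  assumes inc: "\<forall>k\<le>m. t k < t (Suc k)" and ij: "i \<le> j" and jm: "j \<le> Suc m"
  shows "t i \<le> t j"
  using t_strict[OF inc _ jm, of i] ij by (cases "i = j") auto

lemma t_cover:
  fixes t :: "nat \<Rightarrow> real"
  assumes "t 0 < r" "r \<le> t (Suc n)"
  shows "\<exists>k\<le>n. t k < r \<and> r \<le> t (Suc k)"
  using assms
proof (induction n)
  case 0 thus ?case by auto
next
  case (Suc n)
  show ?case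
  proof (cases "r \<le> t (Suc n)")
    case True with Suc.IH Suc.prems obtain k where "k \<le> n" "t k < r" "r \<le> t (Suc k)" by blast
    thus ?thesis by (intro exI[of _ k]) auto
  next
    case False thus ?thesis using Suc.prems by (intro exI[of _ "Suc n"]) auto
  qed
qed

lemma left_lim:
  fixes \<phi> \<phi>' u :: "real \<Rightarrow> real" and t :: "nat \<Rightarrow> real"
  assumes u: "u \<in> PC_space \<phi> \<phi>' a T t m \<sigma>"
    and k: "k \<in> {1..m}"
    and t0: "t 0 = a" and tT: "t (Suc m) = T" and inc: "\<forall>k\<le>m. t k < t (Suc k)"
    and cont: "continuous_on {a..T} \<phi>" and sm: "strict_mono_on {a..T} \<phi>"
  shows "Lim (at_left (t k)) u = u (t k)"
proof -
  obtain j where j: "k = Suc j" "j \<le> m" using k by (cases k) auto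
  define w where "w = (\<lambda>s. (\<phi> s - \<phi> a) powr (1 - \<sigma>) * u s)"
  have cw: "continuous_on {t j<..t k} w" using u j unfolding PC_space_def w_def by auto
  have tjk: "t j < t k" using inc j by auto
  have atk: "a < t k" using t_strict[OF inc, of 0 k] j t0 by auto
  have tkT: "t k \<le> T" using t_mono[OF inc, of k "Suc m"] j tT by auto
  have aj: "a \<le> t j" using t_mono[OF inc, of 0 j] j t0 by auto
  define p where "p = (t j + t k) / 2"
  have p: "t j < p" "p < t k" using tjk by (auto simp: p_def)
  have atl: "at (t k) within {p..t k} = at_left (t k)" by (rule at_within_Icc_at_left) (use p in auto)
  have "continuous_on {p..t k} w" by (rule continuous_on_subset[OF cw]) (use p in auto)
  hence "(w \<longlongrightarrow> w (t k)) (at (t k) within {p..t k})"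
    using p by (auto simp: continuous_on_def)
  hence wl: "(w \<longlongrightarrow> w (t k)) (at_left (t k))" using atl by simp
  have "continuous_on {p..t k} \<phi>" by (rule continuous_on_subset[OF cont]) (use p aj tkT in auto)
  hence "(\<phi> \<longlongrightarrow> \<phi> (t k)) (at (t k) within {p..t k})"
    using p by (auto simp: continuous_on_def)
  hence pl: "(\<phi> \<longlongrightarrow> \<phi> (t k)) (at_left (t k))" using atl by simp
  have Lk: "\<phi> (t k) - \<phi> a > 0" using sm atk tkT by (auto simp: strict_mono_on_def)
  have ll: "((\<lambda>s. (\<phi> s - \<phi> a) powr (1 - \<sigma>)) \<longlongrightarrow> (\<phi> (t k) - \<phi> a) powr (1 - \<sigma>)) (at_left (t k))"
    by (intro tendsto_intros pl) (use Lk in auto)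
  have "((\<lambda>s. w s / (\<phi> s - \<phi> a) powr (1 - \<sigma>)) \<longlongrightarrow> w (t k) / (\<phi> (t k) - \<phi> a) powr (1 - \<sigma>)) (at_left (t k))"
    by (intro tendsto_divide wl ll) (use Lk in auto)
  moreover have "w (t k) / (\<phi> (t k) - \<phi> a) powr (1 - \<sigma>) = u (t k)" using Lk by (simp add: w_def)
  moreover have "eventually (\<lambda>s. w s / (\<phi> s - \<phi> a) powr (1 - \<sigma>) = u s) (at_left (t k))"
  proof -
    have "eventually (\<lambda>s. s \<in> {p<..<t k}) (at_left (t k))"
      using p by (intro eventually_at_left_real) auto
    thus ?thesis
    proof (rule eventually_mono)
      fix s assume s: "s \<in> {p<..<t k}"
      hence "a < s" "s \<le> T" using p aj tkT by auto
      hence "\<phi> s - \<phi> a > 0" using sm by (auto simp: strict_mono_on_def)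
      thus "w s / (\<phi> s - \<phi> a) powr (1 - \<sigma>) = u s" by (simp add: w_def)
    qed
  qed
  ultimately have "(u \<longlongrightarrow> u (t k)) (at_left (t k))"
    using Lim_transform_eventually by fastforce
  thus ?thesis by (intro tendsto_Lim) auto
qed
lemma pw_meas:
  fixes y :: "real \<Rightarrow> real" and t :: "nat \<Rightarrow> real"
  assumes as: "a \<le> s" "s \<le> T"
    and t0: "t 0 = a" and tT: "t (Suc m) = T"
    and yc: "\<forall>k\<le>m. continuous_on {t k<..t (Suc k)} y"
  shows "y \<in> borel_measurable (lebesgue_on {a..s})"
proof (rule measurable_piecewise_restrict[of "insert {a} ((\<lambda>k. {t k<..t (Suc k)}) ` {..m})"])
  show "countable (insert {a} ((\<lambda>k. {t k<..t (Suc k)}) ` {..m}))" by simp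
next
  fix \<Omega> assume \<Omega>C: "\<Omega> \<in> insert {a} ((\<lambda>k. {t k<..t (Suc k)}) ` {..m})"
  hence leb: "\<Omega> \<in> sets lebesgue" by auto
  show "\<Omega> \<inter> space (lebesgue_on {a..s}) \<in> sets (lebesgue_on {a..s})"
    using leb by (simp add: sets_restrict_space_iff sets.Int)
next
  show "space (lebesgue_on {a..s}) \<subseteq> \<Union> (insert {a} ((\<lambda>k. {t k<..t (Suc k)}) ` {..m}))"
  proof
    fix r assume "r \<in> space (lebesgue_on {a..s})"
    hence r: "a \<le> r" "r \<le> s" by auto
    show "r \<in> \<Union> (insert {a} ((\<lambda>k. {t k<..t (Suc k)}) ` {..m}))"
    proof (cases "r = a")
      case False
      hence "t 0 < r" "r \<le> t (Suc m)" using r t0 tT as by auto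
      then obtain k where "k \<le> m" "t k < r" "r \<le> t (Suc k)"
        using t_cover[of t r m] by blast
      thus ?thesis by auto
    qed auto
  qed
next
  fix \<Omega> assume \<Omega>C: "\<Omega> \<in> insert {a} ((\<lambda>k. {t k<..t (Suc k)}) ` {..m})"
  hence leb: "\<Omega> \<in> sets lebesgue" by auto
  have cont: "continuous_on ({a..s} \<inter> \<Omega>) y"
  proof (cases "\<Omega> = {a}")
    case True
    hence "{a..s} \<inter> \<Omega> = {a}" using as by auto
    thus ?thesis by (simp add: continuous_on_sing)
  next
    case False
    then obtain k where "k \<le> m" "\<Omega> = {t k<..t (Suc k)}" using \<Omega>C by auto
    thus ?thesis using yc by (auto intro: continuous_on_subset)
  qed
  have "restrict_space (lebesgue_on {a..s}) \<Omega> = lebesgue_on ({a..s} \<inter> \<Omega>)"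
    by (rule restrict_restrict_space) (use leb in auto)
  moreover have "y \<in> borel_measurable (lebesgue_on ({a..s} \<inter> \<Omega>))"
    by (rule continuous_imp_measurable_on_sets_lebesgue[OF cont]) (use leb in auto)
  ultimately show "y \<in> borel_measurable (restrict_space (lebesgue_on {a..s}) \<Omega>)" by simp
qed
lemma K_int:
  fixes \<phi> \<phi>' :: "real \<Rightarrow> real"
  assumes as: "a < s" "s \<le> T"
    and der: "\<forall>x\<in>{a..T}. (\<phi> has_real_derivative \<phi>' x) (at x within {a..T})"
    and pos: "\<forall>x\<in>{a..T}. \<phi>' x > 0"
    and sm: "strict_mono_on {a..T} \<phi>"
    and \<rho>: "\<rho> > 0"
  shows "((\<lambda>r. \<phi>' r * (\<phi> s - \<phi> r) powr (\<rho> - 1)) has_integral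
           (Beta 1 \<rho> * (\<phi> s - \<phi> a) powr \<rho>)) {a..s}"
proof -
  have "((\<lambda>r. \<phi>' r * (\<phi> s - \<phi> r) powr (\<rho> - 1) * (\<phi> r - \<phi> a) powr 0) has_integral
           (Beta (0 + 1) \<rho> * (\<phi> s - \<phi> a) powr (\<rho> + 0))) {a..s}"
  proof (rule frac_pow)
    fix x assume x: "x \<in> {a..s}"
    hence xT: "x \<in> {a..T}" using as by auto
    show "(\<phi> has_real_derivative \<phi>' x) (at x within {a..s})"
      by (rule DERIV_subset[OF der[rule_format, OF xT]]) (use as in auto)
    show "\<phi>' x > 0" using pos xT by auto
  next
    show "strict_mono_on {a..s} \<phi>" using sm as unfolding strict_mono_on_def by auto
  qed (use as \<rho> in auto)
  hence "((\<lambda>r. \<phi>' r * (\<phi> s - \<phi> r) powr (\<rho> - 1) * (\<phi> r - \<phi> a) powr 0) has_integral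
           (Beta 1 \<rho> * (\<phi> s - \<phi> a) powr \<rho>)) {a..s}" by simp
  thus ?thesis
  proof (rule has_integral_spike_finite[of "{a}", rotated 2])
    fix r assume r: "r \<in> {a..s} - {a}"
    hence "\<phi> r - \<phi> a > 0" using sm as unfolding strict_mono_on_def by auto
    thus "\<phi>' r * (\<phi> s - \<phi> r) powr (\<rho> - 1) = \<phi>' r * (\<phi> s - \<phi> r) powr (\<rho> - 1) * (\<phi> r - \<phi> a) powr 0"
      by simp
  qed simp
qed

lemma Ky_int:
  fixes \<phi> \<phi>' y :: "real \<Rightarrow> real"
  assumes as: "a < s" "s \<le> T"
    and der: "\<forall>x\<in>{a..T}. (\<phi> has_real_derivative \<phi>' x) (at x within {a..T})"
    and cd: "continuous_on {a..T} \<phi>'"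
    and pos: "\<forall>x\<in>{a..T}. \<phi>' x > 0"
    and sm: "strict_mono_on {a..T} \<phi>"
    and cont: "continuous_on {a..T} \<phi>"
    and \<rho>: "\<rho> > 0"
    and ymeas: "y \<in> borel_measurable (lebesgue_on {a..s})"
    and ybd: "\<forall>r\<in>{a..s}. \<bar>y r\<bar> \<le> M"
  shows "(\<lambda>r. \<phi>' r * (\<phi> s - \<phi> r) powr (\<rho> - 1) * y r) integrable_on {a..s}"
proof (rule measurable_bounded_by_integrable_imp_integrable_real)
  have m1: "\<phi>' \<in> borel_measurable (lebesgue_on {a..s})"
    by (rule continuous_imp_measurable_on_sets_lebesgue) (use cd as in \<open>auto intro: continuous_on_subset\<close>)
  have m2: "\<phi> \<in> borel_measurable (lebesgue_on {a..s})"
    by (rule continuous_imp_measurable_on_sets_lebesgue) (use cont as in \<open>auto intro: continuous_on_subset\<close>)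
  show "(\<lambda>r. \<phi>' r * (\<phi> s - \<phi> r) powr (\<rho> - 1) * y r) \<in> borel_measurable (lebesgue_on {a..s})"
    by (intro borel_measurable_times powr_real_measurable borel_measurable_diff m1 m2 ymeas borel_measurable_const)
  show "(\<lambda>r. M * (\<phi>' r * (\<phi> s - \<phi> r) powr (\<rho> - 1))) integrable_on {a..s}"
    using has_integral_mult_right[OF K_int[OF as der pos sm \<rho>], of M] by blast
  fix r assume r: "r \<in> {a..s}"
  have "0 \<le> \<phi>' r" using pos r as by (auto intro: less_imp_le)
  hence k0: "0 \<le> \<phi>' r * (\<phi> s - \<phi> r) powr (\<rho> - 1)" by simp
  have "\<bar>\<phi>' r * (\<phi> s - \<phi> r) powr (\<rho> - 1) * y r\<bar> = (\<phi>' r * (\<phi> s - \<phi> r) powr (\<rho> - 1)) * \<bar>y r\<bar>"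
    by (subst abs_mult) (simp only: abs_of_nonneg[OF k0])
  also have "\<dots> \<le> (\<phi>' r * (\<phi> s - \<phi> r) powr (\<rho> - 1)) * M"
    using ybd r k0 by (intro mult_left_mono) auto
  finally show "\<bar>\<phi>' r * (\<phi> s - \<phi> r) powr (\<rho> - 1) * y r\<bar> \<le> M * (\<phi>' r * (\<phi> s - \<phi> r) powr (\<rho> - 1))"
    by (simp add: mult.commute)
qed auto

lemma ml_mono:
  fixes \<rho> Z1 Z2 :: real
  assumes \<rho>: "\<rho> > 0" and Z: "0 \<le> Z1" "Z1 \<le> Z2"
  shows "(\<Sum>j. Z1 ^ j / Gamma (\<rho> * real j + 1)) \<le> (\<Sum>j. Z2 ^ j / Gamma (\<rho> * real j + 1))"
proof (rule suminf_le)
  fix j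
  have "Gamma (\<rho> * real j + 1) > 0"
  proof -
    have "\<rho> * real j \<ge> 0" using \<rho> by simp
    thus ?thesis by (intro Gamma_real_pos) linarith
  qed
  moreover have "Z1 ^ j \<le> Z2 ^ j" using Z by (intro power_mono) auto
  ultimately show "Z1 ^ j / Gamma (\<rho> * real j + 1) \<le> Z2 ^ j / Gamma (\<rho> * real j + 1)"
    by (simp add: divide_right_mono)
qed (use ml_summable \<rho> Z in auto)

lemma ml_nonneg:
  fixes \<rho> Z :: real
  assumes \<rho>: "\<rho> > 0" and Z: "0 \<le> Z"
  shows "0 \<le> (\<Sum>j. Z ^ j / Gamma (\<rho> * real j + 1))"
proof (rule suminf_nonneg)
  show "summable (\<lambda>j. Z ^ j / Gamma (\<rho> * real j + 1))" by (rule ml_summable[OF \<rho> Z])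
  fix j
  have "Gamma (\<rho> * real j + 1) > 0"
  proof -
    have "\<rho> * real j \<ge> 0" using \<rho> by simp
    thus ?thesis by (intro Gamma_real_pos) linarith
  qed
  thus "0 \<le> Z ^ j / Gamma (\<rho> * real j + 1)" using Z by simp
qed

fun Dseq :: "real \<Rightarrow> real \<Rightarrow> real \<Rightarrow> real \<Rightarrow> nat \<Rightarrow> real" where
  "Dseq B0 E e g 0 = B0"
| "Dseq B0 E e g (Suc i) = Dseq B0 E e g i + (Dseq B0 E e g i * E + e) / g"

lemma Dseq_sum:
  "B0 + (\<Sum>k\<in>{1..i}. Dseq B0 E e g (k - 1) * E + e) / g = Dseq B0 E e g i"
proof (induction i)
  case 0 thus ?case by simp
next
  case (Suc i)
  have "{1..Suc i} = insert (Suc i) {1..i}" by auto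
  hence "(\<Sum>k\<in>{1..Suc i}. Dseq B0 E e g (k - 1) * E + e)
         = (Dseq B0 E e g i * E + e) + (\<Sum>k\<in>{1..i}. Dseq B0 E e g (k - 1) * E + e)" by simp
  hence "B0 + (\<Sum>k\<in>{1..Suc i}. Dseq B0 E e g (k - 1) * E + e) / g
       = (B0 + (\<Sum>k\<in>{1..i}. Dseq B0 E e g (k - 1) * E + e) / g) + (Dseq B0 E e g i * E + e) / g"
    by (simp add: add_divide_distrib)
  also note Suc.IH
  finally show ?case by simp
qed

lemma Dseq_nonneg:
  assumes "B0 \<ge> 0" "E \<ge> 0" "e \<ge> 0" "g > 0"
  shows "Dseq B0 E e g i \<ge> 0"
  using assms by (induction i) auto

lemma Dseq_mono:
  assumes "B0 \<ge> 0" "E \<ge> 0" "e \<ge> 0" "g > 0" "i \<le> j"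
  shows "Dseq B0 E e g i \<le> Dseq B0 E e g j"
  using assms(5)
proof (induction j)
  case 0 thus ?case by simp
next
  case (Suc j)
  have "Dseq B0 E e g j \<le> Dseq B0 E e g (Suc j)"
    using Dseq_nonneg[OF assms(1-4), of j] assms by simp
  thus ?case using Suc by (cases "i = Suc j") auto
qed

lemma Dseq_bound:
  assumes B0: "B0 \<ge> 0" and E: "E \<ge> 0" and e: "e \<ge> 0" and g: "g > 0"
  shows "Dseq B0 E e g i \<le> (B0 + real i * (e / g)) * (1 + E / g) ^ i"
proof (induction i)
  case 0 thus ?case by simp
next
  case (Suc i)
  define q where "q = 1 + E / g"
  have q: "q \<ge> 1" using E g by (simp add: q_def)
  have "Dseq B0 E e g (Suc i) = Dseq B0 E e g i * q + e / g"
    by (simp add: q_def algebra_simps add_divide_distrib)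
  also have "\<dots> \<le> (B0 + real i * (e / g)) * q ^ i * q + e / g"
    using Suc.IH q unfolding q_def by (intro add_right_mono mult_right_mono) auto
  also have "e / g \<le> (e / g) * q ^ Suc i"
  proof -
    have "1 \<le> q ^ Suc i" using q by (rule one_le_power)
    moreover have "0 \<le> e / g" using e g by simp
    ultimately show ?thesis using mult_left_mono[of 1 "q ^ Suc i" "e / g"] by simp
  qed
  hence "(B0 + real i * (e / g)) * q ^ i * q + e / g \<le> (B0 + real i * (e / g)) * q ^ i * q + (e / g) * q ^ Suc i"
    by simp
  also have "\<dots> = (B0 + real (Suc i) * (e / g)) * q ^ Suc i"
    by (simp add: algebra_simps)
  finally show ?case by (simp add: q_def)
qed


theorem mainTheorem3:
  fixes a T :: real and m :: nat and t :: "nat \<Rightarrow> real"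
    and \<phi> \<phi>' :: "real \<Rightarrow> real" and \<rho> \<nu> \<sigma> :: real
    and f f' :: "real \<Rightarrow> real \<Rightarrow> real" and Jk Jk' :: "nat \<Rightarrow> real \<Rightarrow> real"
    and ua va \<delta>a \<epsilon>f \<epsilon>J :: real and u v :: "real \<Rightarrow> real"
  assumes "a < T" and "m \<ge> 1"
    and "t 0 = a" and "t (Suc m) = T" and "\<forall>k\<le>m. t k < t (Suc k)"
    and "\<forall>s\<in>{a..T}. (\<phi> has_real_derivative \<phi>' s) (at s within {a..T})"
    and "continuous_on {a..T} \<phi>'"
    and "mono_on {a..T} \<phi>"
    and "\<forall>s\<in>{a..T}. \<phi>' s \<noteq> 0"
    and "0 < \<rho>" and "\<rho> < 1" and "0 \<le> \<nu>" and "\<nu> \<le> 1"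
    and "\<sigma> = \<rho> + \<nu> - \<rho> * \<nu>"
    \<comment> \<open>(H1)(ii)\<close>
    and H1: "\<forall>w1\<in>PC_space \<phi> \<phi>' a T t m \<sigma>. \<forall>w2\<in>PC_space \<phi> \<phi>' a T t m \<sigma>.
             \<forall>s\<in>{a<..T} - t ` {1..m}.
               \<bar>f s (w1 s) - f s (w2 s)\<bar> \<le> (\<phi> s - \<phi> a) powr (1 - \<sigma>) * \<bar>w1 s - w2 s\<bar>"
    \<comment> \<open>(H2)(i)\<close>
    and H2: "\<forall>k\<in>{1..m}. \<forall>w1\<in>PC_space \<phi> \<phi>' a T t m \<sigma>. \<forall>w2\<in>PC_space \<phi> \<phi>' a T t m \<sigma>.
               \<bar>Jk k (Lim (at_left (t k)) w1) - Jk k (Lim (at_left (t k)) w2)\<bar>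
                 \<le> (\<phi> (t k) - \<phi> a) powr (1 - \<sigma>)
                     * \<bar>Lim (at_left (t k)) w1 - Lim (at_left (t k)) w2\<bar>"
    and "\<delta>a > 0" and "\<epsilon>f > 0" and "\<epsilon>J > 0"
    and "\<bar>ua - va\<bar> \<le> \<delta>a"
    and "\<forall>s\<in>{a<..T}. \<forall>w. \<bar>f s w - f' s w\<bar> \<le> \<epsilon>f"
    and "\<forall>k\<in>{1..m}. \<forall>w. \<bar>Jk k w - Jk' k w\<bar> \<le> \<epsilon>J"
    and "is_solution \<phi> \<phi>' a T t m \<sigma> \<rho> f Jk ua u"
    and "is_solution \<phi> \<phi>' a T t m \<sigma> \<rho> f' Jk' va v"
  shows "PC_norm \<phi> a T \<sigma> (\<lambda>s. u s - v s)
         \<le> (\<delta>a / Gamma \<sigma> + real m * \<epsilon>J / Gamma \<sigma>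
             + (\<phi> T - \<phi> a) powr (1 - \<sigma> + \<rho>) / Gamma (\<rho> + 1) * \<epsilon>f)
           * ((1 + mittag_leffler \<rho> ((\<phi> T - \<phi> a) powr (1 - \<sigma> + \<rho>)) / Gamma \<sigma>) ^ m
              * mittag_leffler \<rho> ((\<phi> T - \<phi> a) powr (1 - \<sigma> + \<rho>)))"
proof -
  note aT = assms(1) and t0 = assms(3) and tT = assms(4) and inc = assms(5) and der = assms(6)
    and cd = assms(7) and mono = assms(8) and nz = assms(9) and \<rho>0 = assms(10) and \<rho>1 = assms(11)
    and \<nu>0 = assms(12) and \<nu>1 = assms(13) and \<sigma>def = assms(14)
    and \<delta> = assms(17) and \<epsilon>f = assms(18) and \<epsilon>J = assms(19) and uva = assms(20)
    and ff' = assms(21) and JJ' = assms(22) and solu = assms(23) and solv = assms(24)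
  have \<sigma>1: "\<sigma> \<le> 1"
  proof -
    have "\<sigma> = 1 - (1 - \<rho>) * (1 - \<nu>)" using \<sigma>def by (simp add: algebra_simps)
    moreover have "(1 - \<rho>) * (1 - \<nu>) \<ge> 0" using \<rho>1 \<nu>1 by simp
    ultimately show ?thesis by linarith
  qed
  have \<sigma>\<rho>: "\<rho> \<le> \<sigma>"
  proof -
    have "\<sigma> = \<rho> + \<nu> * (1 - \<rho>)" using \<sigma>def by (simp add: algebra_simps)
    moreover have "\<nu> * (1 - \<rho>) \<ge> 0" using \<rho>1 \<nu>0 by simp
    ultimately show ?thesis by linarith
  qed
  have \<sigma>0: "\<sigma> > 0" using \<sigma>\<rho> \<rho>0 by simp
  have G\<sigma>: "Gamma \<sigma> > 0" using \<sigma>0 by simp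
  have G\<rho>: "Gamma \<rho> > 0" using \<rho>0 by simp
  have G\<rho>1: "Gamma (\<rho> + 1) > 0" using \<rho>0 by (intro Gamma_real_pos) simp
  obtain pos: "\<forall>x\<in>{a..T}. \<phi>' x > 0" and sm: "strict_mono_on {a..T} \<phi>" and cont: "continuous_on {a..T} \<phi>"
    using phi_props[OF aT der cd mono nz] by blast
  have Lpos: "\<phi> r - \<phi> a > 0" if "r \<in> {a<..T}" for r
    using sm that aT by (auto simp: strict_mono_on_def)
  have LT: "\<phi> r - \<phi> a \<le> \<phi> T - \<phi> a" if "r \<in> {a..T}" for r
    using sm that aT by (cases "r = T") (auto simp: strict_mono_on_def less_imp_le)
  have LTpos: "\<phi> T - \<phi> a > 0" using Lpos aT by auto
  define G where "G = (\<phi> T - \<phi> a) powr (1 - \<sigma>)"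
  define X where "X = (\<phi> T - \<phi> a) powr (1 - \<sigma> + \<rho>)"
  define E where "E = mittag_leffler \<rho> X"
  have G0: "G \<ge> 0" by (simp add: G_def)
  have X0: "X \<ge> 0" by (simp add: X_def)
  have E0: "E \<ge> 0" unfolding E_def mittag_leffler_def by (rule ml_nonneg[OF \<rho>0 X0])
  define y where "y = (\<lambda>r. (\<phi> r - \<phi> a) powr (1 - \<sigma>) * \<bar>u r - v r\<bar>)"
  define wu where "wu = (\<lambda>r. (\<phi> r - \<phi> a) powr (1 - \<sigma>) * u r)"
  define wv where "wv = (\<lambda>r. (\<phi> r - \<phi> a) powr (1 - \<sigma>) * v r)"
  have ywv: "y r = \<bar>wu r - wv r\<bar>" for r
    by (simp add: y_def wu_def wv_def abs_mult right_diff_distrib[symmetric])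
  have y0: "y a = 0" by (simp add: y_def)
  have ynn: "y r \<ge> 0" for r by (simp add: y_def)
  have uPC: "u \<in> PC_space \<phi> \<phi>' a T t m \<sigma>" using solu unfolding is_solution_def by blast
  have vPC: "v \<in> PC_space \<phi> \<phi>' a T t m \<sigma>" using solv unfolding is_solution_def by blast
  obtain Mu where Mu: "\<And>r. r \<in> {a<..T} \<Longrightarrow> \<bar>wu r\<bar> \<le> Mu"
    using uPC unfolding PC_space_def wu_def bounded_iff by fastforce
  obtain Mv where Mv: "\<And>r. r \<in> {a<..T} \<Longrightarrow> \<bar>wv r\<bar> \<le> Mv"
    using vPC unfolding PC_space_def wv_def bounded_iff by fastforce
  define M where "M = Mu + Mv"
  have yM: "y r \<le> M" if "r \<in> {a<..T}" for r
    using Mu[OF that] Mv[OF that] unfolding ywv M_def by linarith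
  have M0: "M \<ge> 0" using yM[of T] ynn[of T] aT by auto
  have yM': "\<bar>y r\<bar> \<le> M" if "r \<in> {a..T}" for r
    using yM[of r] that y0 M0 ynn[of r] by (cases "r = a") auto
  have yc: "\<forall>k\<le>m. continuous_on {t k<..t (Suc k)} y"
  proof (intro allI impI)
    fix k assume k: "k \<le> m"
    have "continuous_on {t k<..t (Suc k)} wu" "continuous_on {t k<..t (Suc k)} wv"
      using uPC vPC k unfolding PC_space_def wu_def wv_def by auto
    hence "continuous_on {t k<..t (Suc k)} (\<lambda>r. \<bar>wu r - wv r\<bar>)"
      by (intro continuous_intros)
    thus "continuous_on {t k<..t (Suc k)} y" unfolding ywv[abs_def] .
  qed
  have Kyint: "(\<lambda>r. \<phi>' r * (\<phi> s - \<phi> r) powr (\<rho> - 1) * y r) integrable_on {a..s}"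
    if s: "s \<in> {a<..T}" for s
  proof (rule Ky_int[OF _ _ der cd pos sm cont \<rho>0])
    show "a < s" "s \<le> T" using s by auto
    show "y \<in> borel_measurable (lebesgue_on {a..s})"
      by (rule pw_meas[OF _ _ t0 tT yc]) (use s in auto)
    show "\<forall>r\<in>{a..s}. \<bar>y r\<bar> \<le> M" using yM' s by auto
  qed
  have limu: "Lim (at_left (t k)) u = u (t k)" if "k \<in> {1..m}" for k
    by (rule left_lim[OF uPC that t0 tT inc cont sm])
  have limv: "Lim (at_left (t k)) v = v (t k)" if "k \<in> {1..m}" for k
    by (rule left_lim[OF vPC that t0 tT inc cont sm])
  have tk_in: "t k \<in> {a<..T}" if "k \<in> {1..m}" for k
  proof -
    have "t 0 < t k" using t_strict[OF inc, of 0 k] that by auto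
    moreover have "t k \<le> t (Suc m)" using t_mono[OF inc, of k "Suc m"] that by auto
    ultimately show ?thesis using t0 tT by auto
  qed
  have star: "y s \<le> (\<delta>a + (\<Sum>k\<in>{k\<in>{1..m}. t k < s}. y (t k) + \<epsilon>J)) / Gamma \<sigma>
                 + X / Gamma (\<rho> + 1) * \<epsilon>f
                 + G / Gamma \<rho> * integral {a..s} (\<lambda>r. \<phi>' r * (\<phi> s - \<phi> r) powr (\<rho> - 1) * y r)"
    if s: "s \<in> {a<..T}" for s
  proof -
    define Ls where "Ls = \<phi> s - \<phi> a"
    have Ls: "Ls > 0" using Lpos[OF s] by (simp add: Ls_def)
    define S where "S = {k\<in>{1..m}. t k < s}"
    have Sfin: "finite S" by (simp add: S_def)
    define K where "K = (\<lambda>r. \<phi>' r * (\<phi> s - \<phi> r) powr (\<rho> - 1))"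
    have K0: "K r \<ge> 0" if "r \<in> {a..s}" for r
    proof -
      have "\<phi>' r > 0" using pos that s by auto
      thus ?thesis by (simp add: K_def)
    qed
    define Iu where "Iu = integral {a..s} (\<lambda>r. K r * f r (u r))"
    define Iv where "Iv = integral {a..s} (\<lambda>r. K r * f' r (v r))"
    have intu: "(\<lambda>r. K r * f r (u r)) integrable_on {a..s}"
      using solu s unfolding is_solution_def K_def by (simp add: mult.assoc)
    have intv: "(\<lambda>r. K r * f' r (v r)) integrable_on {a..s}"
      using solv s unfolding is_solution_def K_def by (simp add: mult.assoc)
    have us: "u s = Ls powr (\<sigma> - 1) / Gamma \<sigma> * (ua + (\<Sum>k\<in>S. Jk k (u (t k)))) + Iu / Gamma \<rho>"
    proof -
      have "u s = Ls powr (\<sigma> - 1) / Gamma \<sigma> * (ua + (\<Sum>k\<in>S. Jk k (Lim (at_left (t k)) u)))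
                   + frac_int \<phi> \<phi>' a \<rho> (\<lambda>r. f r (u r)) s"
        using solu s unfolding is_solution_def Ls_def S_def by blast
      moreover have "(\<Sum>k\<in>S. Jk k (Lim (at_left (t k)) u)) = (\<Sum>k\<in>S. Jk k (u (t k)))"
        by (rule sum.cong) (auto simp: S_def limu)
      moreover have "frac_int \<phi> \<phi>' a \<rho> (\<lambda>r. f r (u r)) s = Iu / Gamma \<rho>"
        using \<rho>0 by (simp add: frac_int_def Iu_def K_def mult.assoc)
      ultimately show ?thesis by simp
    qed
    have vs: "v s = Ls powr (\<sigma> - 1) / Gamma \<sigma> * (va + (\<Sum>k\<in>S. Jk' k (v (t k)))) + Iv / Gamma \<rho>"
    proof -
      have "v s = Ls powr (\<sigma> - 1) / Gamma \<sigma> * (va + (\<Sum>k\<in>S. Jk' k (Lim (at_left (t k)) v)))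
                   + frac_int \<phi> \<phi>' a \<rho> (\<lambda>r. f' r (v r)) s"
        using solv s unfolding is_solution_def Ls_def S_def by blast
      moreover have "(\<Sum>k\<in>S. Jk' k (Lim (at_left (t k)) v)) = (\<Sum>k\<in>S. Jk' k (v (t k)))"
        by (rule sum.cong) (auto simp: S_def limv)
      moreover have "frac_int \<phi> \<phi>' a \<rho> (\<lambda>r. f' r (v r)) s = Iv / Gamma \<rho>"
        using \<rho>0 by (simp add: frac_int_def Iv_def K_def mult.assoc)
      ultimately show ?thesis by simp
    qed
    define SJ where "SJ = (\<Sum>k\<in>S. Jk k (u (t k))) - (\<Sum>k\<in>S. Jk' k (v (t k)))"
    have Lc1: "Ls powr (1 - \<sigma>) * Ls powr (\<sigma> - 1) = 1"
      using Ls by (simp add: powr_add[symmetric])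
    have Lc0: "Ls powr (1 - \<sigma>) \<ge> 0" by simp
    have ydiff: "Ls powr (1 - \<sigma>) * (u s - v s) = ((ua - va) + SJ) / Gamma \<sigma> + Ls powr (1 - \<sigma>) * (Iu - Iv) / Gamma \<rho>"
    proof -
      have "u s - v s = Ls powr (\<sigma> - 1) / Gamma \<sigma> * ((ua - va) + SJ) + (Iu - Iv) / Gamma \<rho>"
        unfolding us vs SJ_def by (simp add: algebra_simps diff_divide_distrib)
      hence "Ls powr (1 - \<sigma>) * (u s - v s)
            = (Ls powr (1 - \<sigma>) * Ls powr (\<sigma> - 1)) / Gamma \<sigma> * ((ua - va) + SJ) + Ls powr (1 - \<sigma>) * (Iu - Iv) / Gamma \<rho>"
        by (simp add: algebra_simps)
      thus ?thesis unfolding Lc1 by simp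
    qed
    have ys: "y s = \<bar>((ua - va) + SJ) / Gamma \<sigma> + Ls powr (1 - \<sigma>) * (Iu - Iv) / Gamma \<rho>\<bar>"
    proof -
      have "y s = \<bar>Ls powr (1 - \<sigma>) * (u s - v s)\<bar>" by (simp add: y_def Ls_def abs_mult)
      thus ?thesis unfolding ydiff .
    qed
    have SJb: "\<bar>SJ\<bar> \<le> (\<Sum>k\<in>S. y (t k) + \<epsilon>J)"
    proof -
      have "SJ = (\<Sum>k\<in>S. Jk k (u (t k)) - Jk' k (v (t k)))" by (simp add: SJ_def sum_subtractf)
      hence "\<bar>SJ\<bar> \<le> (\<Sum>k\<in>S. \<bar>Jk k (u (t k)) - Jk' k (v (t k))\<bar>)" by (simp add: sum_abs)
      also have "\<dots> \<le> (\<Sum>k\<in>S. y (t k) + \<epsilon>J)"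
      proof (rule sum_mono)
        fix k assume "k \<in> S"
        hence k: "k \<in> {1..m}" by (simp add: S_def)
        have "\<bar>Jk k (Lim (at_left (t k)) u) - Jk k (Lim (at_left (t k)) v)\<bar>
                 \<le> (\<phi> (t k) - \<phi> a) powr (1 - \<sigma>) * \<bar>Lim (at_left (t k)) u - Lim (at_left (t k)) v\<bar>"
          using H2 k uPC vPC by blast
        hence 1: "\<bar>Jk k (u (t k)) - Jk k (v (t k))\<bar> \<le> y (t k)"
          by (simp add: limu[OF k] limv[OF k] y_def)
        have 2: "\<bar>Jk k (v (t k)) - Jk' k (v (t k))\<bar> \<le> \<epsilon>J" using JJ' k by blast
        show "\<bar>Jk k (u (t k)) - Jk' k (v (t k))\<bar> \<le> y (t k) + \<epsilon>J" using 1 2 by linarith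
      qed
      finally show ?thesis .
    qed
    have Kint: "(K has_integral (Beta 1 \<rho> * Ls powr \<rho>)) {a..s}"
      using K_int[OF _ _ der pos sm \<rho>0, of s] s unfolding K_def Ls_def by auto
    have Kyi: "(\<lambda>r. K r * y r) integrable_on {a..s}" using Kyint[OF s] unfolding K_def .
    have Ib: "\<bar>Iu - Iv\<bar> \<le> integral {a..s} (\<lambda>r. K r * y r) + \<epsilon>f * (Beta 1 \<rho> * Ls powr \<rho>)"
    proof -
      define N where "N = insert a (t ` {1..m})"
      have Nfin: "finite N" by (simp add: N_def)
      define g where "g = (\<lambda>r. if r \<in> N then 0 else K r * f r (u r) - K r * f' r (v r))"
      have dint: "(\<lambda>r. K r * f r (u r) - K r * f' r (v r)) integrable_on {a..s}"
        using intu intv by (rule integrable_diff)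
      have "Iu - Iv = integral {a..s} (\<lambda>r. K r * f r (u r) - K r * f' r (v r))"
        unfolding Iu_def Iv_def by (rule integral_diff[symmetric, OF intu intv])
      also have "\<dots> = integral {a..s} g"
        by (rule integral_spike[of N]) (auto simp: g_def Nfin negligible_finite)
      finally have Ig: "Iu - Iv = integral {a..s} g" .
      have gint: "g integrable_on {a..s}"
        by (rule integrable_spike_finite[OF Nfin _ dint]) (auto simp: g_def)
      have Ky2: "(\<lambda>r. K r * y r + \<epsilon>f * K r) integrable_on {a..s}"
        using Kyi has_integral_mult_right[OF Kint, of \<epsilon>f] by (intro integrable_add) auto
      have "norm (integral {a..s} g) \<le> integral {a..s} (\<lambda>r. K r * y r + \<epsilon>f * K r)"
      proof (rule integral_norm_bound_integral[OF gint Ky2])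
        fix r assume r: "r \<in> {a..s}"
        show "norm (g r) \<le> K r * y r + \<epsilon>f * K r"
        proof (cases "r \<in> N")
          case True
          thus ?thesis using K0[OF r] ynn[of r] \<epsilon>f by (simp add: g_def)
        next
          case False
          hence rT: "r \<in> {a<..T} - t ` {1..m}" using r s by (auto simp: N_def)
          have 1: "\<bar>f r (u r) - f r (v r)\<bar> \<le> y r"
            using H1 uPC vPC rT unfolding y_def by blast
          have 2: "\<bar>f r (v r) - f' r (v r)\<bar> \<le> \<epsilon>f" using ff' rT by blast
          have "\<bar>f r (u r) - f' r (v r)\<bar> \<le> y r + \<epsilon>f" using 1 2 by linarith
          hence "K r * \<bar>f r (u r) - f' r (v r)\<bar> \<le> K r * (y r + \<epsilon>f)"
            using K0[OF r] by (rule mult_left_mono)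
          moreover have "norm (g r) = K r * \<bar>f r (u r) - f' r (v r)\<bar>"
            using False K0[OF r] by (simp add: g_def abs_mult right_diff_distrib[symmetric])
          ultimately show ?thesis by (simp add: algebra_simps)
        qed
      qed
      also have "integral {a..s} (\<lambda>r. K r * y r + \<epsilon>f * K r)
                  = integral {a..s} (\<lambda>r. K r * y r) + \<epsilon>f * (Beta 1 \<rho> * Ls powr \<rho>)"
      proof -
        have "((\<lambda>r. K r * y r + \<epsilon>f * K r) has_integral
                integral {a..s} (\<lambda>r. K r * y r) + \<epsilon>f * (Beta 1 \<rho> * Ls powr \<rho>)) {a..s}"
          by (intro has_integral_add integrable_integral Kyi has_integral_mult_right Kint)
        thus ?thesis by blast
      qed
      finally show ?thesis unfolding Ig by simp
    qed
    have IKy0: "integral {a..s} (\<lambda>r. K r * y r) \<ge> 0"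
      by (rule integral_nonneg[OF Kyi]) (use K0 ynn in auto)
    have LG: "Ls powr (1 - \<sigma>) \<le> G"
      unfolding G_def Ls_def using Ls LT[of s] s \<sigma>1 by (intro powr_mono2) (auto simp: Ls_def)
    have LX: "Ls powr (1 - \<sigma> + \<rho>) \<le> X"
      unfolding X_def Ls_def using Ls LT[of s] s \<sigma>1 \<rho>0 by (intro powr_mono2) (auto simp: Ls_def)
    have Beta1: "Beta 1 \<rho> = Gamma \<rho> / Gamma (\<rho> + 1)"
      by (simp add: Beta_def add.commute)
    have part2: "Ls powr (1 - \<sigma>) * \<bar>Iu - Iv\<bar> / Gamma \<rho>
        \<le> X / Gamma (\<rho> + 1) * \<epsilon>f + G / Gamma \<rho> * integral {a..s} (\<lambda>r. K r * y r)"
    proof -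
      have "Ls powr (1 - \<sigma>) * \<bar>Iu - Iv\<bar> / Gamma \<rho>
            \<le> Ls powr (1 - \<sigma>) * (integral {a..s} (\<lambda>r. K r * y r) + \<epsilon>f * (Beta 1 \<rho> * Ls powr \<rho>)) / Gamma \<rho>"
        using Ib G\<rho> by (intro divide_right_mono mult_left_mono) auto
      also have "\<dots> = Ls powr (1 - \<sigma>) * integral {a..s} (\<lambda>r. K r * y r) / Gamma \<rho>
                     + \<epsilon>f * (Ls powr (1 - \<sigma>) * Ls powr \<rho>) / Gamma (\<rho> + 1)"
        using G\<rho> by (simp add: Beta1 field_simps)
      also have "Ls powr (1 - \<sigma>) * Ls powr \<rho> = Ls powr (1 - \<sigma> + \<rho>)"
        by (simp add: powr_add)
      also have "Ls powr (1 - \<sigma>) * integral {a..s} (\<lambda>r. K r * y r) / Gamma \<rho>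
                  \<le> G * integral {a..s} (\<lambda>r. K r * y r) / Gamma \<rho>"
        using LG IKy0 G\<rho> by (intro divide_right_mono mult_right_mono) auto
      also have "\<epsilon>f * Ls powr (1 - \<sigma> + \<rho>) / Gamma (\<rho> + 1) \<le> \<epsilon>f * X / Gamma (\<rho> + 1)"
        using LX \<epsilon>f G\<rho>1 by (intro divide_right_mono mult_left_mono) auto
      finally show ?thesis by (simp add: algebra_simps)
    qed
    have part1: "\<bar>(ua - va) + SJ\<bar> / Gamma \<sigma> \<le> (\<delta>a + (\<Sum>k\<in>S. y (t k) + \<epsilon>J)) / Gamma \<sigma>"
    proof -
      have "\<bar>(ua - va) + SJ\<bar> \<le> \<bar>ua - va\<bar> + \<bar>SJ\<bar>" by (rule abs_triangle_ineq)
      also have "\<dots> \<le> \<delta>a + (\<Sum>k\<in>S. y (t k) + \<epsilon>J)" using uva SJb by linarith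
      finally show ?thesis using G\<sigma> by (intro divide_right_mono) auto
    qed
    have "y s \<le> \<bar>(ua - va) + SJ\<bar> / Gamma \<sigma> + Ls powr (1 - \<sigma>) * \<bar>Iu - Iv\<bar> / Gamma \<rho>"
    proof -
      have "y s \<le> \<bar>((ua - va) + SJ) / Gamma \<sigma>\<bar> + \<bar>Ls powr (1 - \<sigma>) * (Iu - Iv) / Gamma \<rho>\<bar>"
        unfolding ys by (rule abs_triangle_ineq)
      also have "\<bar>((ua - va) + SJ) / Gamma \<sigma>\<bar> = \<bar>(ua - va) + SJ\<bar> / Gamma \<sigma>" using G\<sigma> by simp
      also have "\<bar>Ls powr (1 - \<sigma>) * (Iu - Iv) / Gamma \<rho>\<bar> = Ls powr (1 - \<sigma>) * \<bar>Iu - Iv\<bar> / Gamma \<rho>"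
        using G\<rho> by (simp add: abs_mult)
      finally show ?thesis .
    qed
    thus ?thesis using part1 part2 unfolding S_def K_def by linarith
  qed
  define D where "D = Dseq (\<delta>a / Gamma \<sigma> + X / Gamma (\<rho> + 1) * \<epsilon>f) E \<epsilon>J (Gamma \<sigma>)"
  have B00: "\<delta>a / Gamma \<sigma> + X / Gamma (\<rho> + 1) * \<epsilon>f \<ge> 0"
    using \<delta> \<epsilon>f G\<sigma> G\<rho>1 X0 by simp
  have Dnn: "D i \<ge> 0" for i unfolding D_def by (rule Dseq_nonneg[OF B00 E0]) (use \<epsilon>J G\<sigma> in auto)
  have claim: "\<forall>s\<in>{a<..t (Suc i)}. y s \<le> D i * E" if "i \<le> m" for i
    using that
  proof (induction i rule: less_induct)
    case (less i)
    define b where "b = t (Suc i)"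
    have ab: "a < b" using t_strict[OF inc, of 0 "Suc i"] less.prems t0 by (simp add: b_def)
    have bT: "b \<le> T" using t_mono[OF inc, of "Suc i" "Suc m"] less.prems tT by (simp add: b_def)
    have Dsum: "(\<delta>a / Gamma \<sigma> + X / Gamma (\<rho> + 1) * \<epsilon>f) + (\<Sum>k\<in>{1..i}. D (k - 1) * E + \<epsilon>J) / Gamma \<sigma> = D i"
      unfolding D_def by (rule Dseq_sum)
    have ineq: "y s \<le> D i + G / Gamma \<rho> * integral {a..s} (\<lambda>r. \<phi>' r * (\<phi> s - \<phi> r) powr (\<rho> - 1) * y r)"
      if s: "s \<in> {a<..b}" for s
    proof -
      have sT: "s \<in> {a<..T}" using s bT by auto
      have sub: "{k\<in>{1..m}. t k < s} \<subseteq> {1..i}"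
      proof
        fix k assume k: "k \<in> {k\<in>{1..m}. t k < s}"
        have "k \<le> i"
        proof (rule ccontr)
          assume "\<not> k \<le> i"
          hence "t (Suc i) \<le> t k" using k by (intro t_mono[OF inc]) auto
          thus False using k s by (auto simp: b_def)
        qed
        thus "k \<in> {1..i}" using k by auto
      qed
      have "(\<Sum>k\<in>{k\<in>{1..m}. t k < s}. y (t k) + \<epsilon>J) \<le> (\<Sum>k\<in>{1..i}. y (t k) + \<epsilon>J)"
        by (rule sum_mono2[OF _ sub]) (use ynn \<epsilon>J in \<open>auto intro: add_nonneg_nonneg less_imp_le\<close>)
      also have "\<dots> \<le> (\<Sum>k\<in>{1..i}. D (k - 1) * E + \<epsilon>J)"
      proof (rule sum_mono)
        fix k assume k: "k \<in> {1..i}"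
        hence km: "k \<in> {1..m}" using less.prems by auto
        have "k - 1 < i" "k - 1 \<le> m" using k less.prems by auto
        from less.IH[OF this] have "\<forall>s\<in>{a<..t (Suc (k - 1))}. y s \<le> D (k - 1) * E" .
        moreover have "Suc (k - 1) = k" using k by auto
        ultimately have "\<forall>s\<in>{a<..t k}. y s \<le> D (k - 1) * E" by simp
        moreover have "t k \<in> {a<..t k}" using tk_in[OF km] by auto
        ultimately show "y (t k) + \<epsilon>J \<le> D (k - 1) * E + \<epsilon>J" by auto
      qed
      finally have S: "(\<Sum>k\<in>{k\<in>{1..m}. t k < s}. y (t k) + \<epsilon>J) \<le> (\<Sum>k\<in>{1..i}. D (k - 1) * E + \<epsilon>J)" .
      have "(\<delta>a + (\<Sum>k\<in>{k\<in>{1..m}. t k < s}. y (t k) + \<epsilon>J)) / Gamma \<sigma>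
            \<le> (\<delta>a + (\<Sum>k\<in>{1..i}. D (k - 1) * E + \<epsilon>J)) / Gamma \<sigma>"
        using S G\<sigma> by (intro divide_right_mono add_left_mono) auto
      also have "\<dots> + X / Gamma (\<rho> + 1) * \<epsilon>f = D i"
        using Dsum by (simp add: add_divide_distrib)
      finally have "(\<delta>a + (\<Sum>k\<in>{k\<in>{1..m}. t k < s}. y (t k) + \<epsilon>J)) / Gamma \<sigma> + X / Gamma (\<rho> + 1) * \<epsilon>f \<le> D i"
        by linarith
      thus ?thesis using star[OF sT] by linarith
    qed
    have gw: "y s \<le> D i * (\<Sum>j. (G * (\<phi> b - \<phi> a) powr \<rho>) ^ j / Gamma (\<rho> * real j + 1))"
      if s: "s \<in> {a<..b}" for s
    proof (rule gronwall_frac[where y=y and A="D i" and M=M and \<phi>=\<phi> and \<phi>'=\<phi>' and G=G and \<rho>=\<rho> and a=a and b=b])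
      show "a < b" by (rule ab)
      show "0 < \<rho>" by (rule \<rho>0)
      show "0 \<le> G" by (rule G0)
      show "0 \<le> D i" by (rule Dnn)
      show "y a = 0" by (rule y0)
      show "s \<in> {a<..b}" by (rule s)
    next
      fix x assume x: "x \<in> {a..b}"
      hence xT: "x \<in> {a..T}" using bT by auto
      show "(\<phi> has_real_derivative \<phi>' x) (at x within {a..b})"
        by (rule DERIV_subset[OF der[rule_format, OF xT]]) (use bT in auto)
      show "\<phi>' x > 0" using pos xT by auto
    next
      show "strict_mono_on {a..b} \<phi>" using sm bT unfolding strict_mono_on_def by auto
    next
      fix r assume "r \<in> {a<..b}"
      hence "r \<in> {a<..T}" using bT by auto
      thus "0 \<le> y r \<and> y r \<le> M" using ynn yM by auto
    next
      fix s assume "s \<in> {a<..b}"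
      hence "s \<in> {a<..T}" using bT by auto
      thus "(\<lambda>r. \<phi>' r * (\<phi> s - \<phi> r) powr (\<rho> - 1) * y r) integrable_on {a..s}" by (rule Kyint)
    next
      fix s assume "s \<in> {a<..b}"
      thus "y s \<le> D i + G / Gamma \<rho> * integral {a..s} (\<lambda>r. \<phi>' r * (\<phi> s - \<phi> r) powr (\<rho> - 1) * y r)"
        by (rule ineq)
    qed
    have ZX: "G * (\<phi> b - \<phi> a) powr \<rho> \<le> X"
    proof -
      have "(\<phi> b - \<phi> a) powr \<rho> \<le> (\<phi> T - \<phi> a) powr \<rho>"
        using Lpos[of b] LT[of b] ab bT \<rho>0 by (intro powr_mono2) auto
      hence "G * (\<phi> b - \<phi> a) powr \<rho> \<le> G * (\<phi> T - \<phi> a) powr \<rho>" using G0 by (rule mult_left_mono)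
      also have "\<dots> = X" by (simp add: G_def X_def powr_add)
      finally show ?thesis .
    qed
    have Emono: "(\<Sum>j. (G * (\<phi> b - \<phi> a) powr \<rho>) ^ j / Gamma (\<rho> * real j + 1)) \<le> E"
      unfolding E_def mittag_leffler_def
      by (rule ml_mono[OF \<rho>0 _ ZX]) (use G0 in simp)
    show ?case
    proof
      fix s assume s: "s \<in> {a<..t (Suc i)}"
      hence "s \<in> {a<..b}" by (simp add: b_def)
      from gw[OF this] have "y s \<le> D i * (\<Sum>j. (G * (\<phi> b - \<phi> a) powr \<rho>) ^ j / Gamma (\<rho> * real j + 1))" .
      also have "\<dots> \<le> D i * E" using Emono Dnn[of i] by (rule mult_left_mono)
      finally show "y s \<le> D i * E" .
    qed
  qed
  have final: "y s \<le> D m * E" if "s \<in> {a<..T}" for s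
    using claim[of m] that tT by auto
  have "PC_norm \<phi> a T \<sigma> (\<lambda>s. u s - v s) \<le> D m * E"
    unfolding PC_norm_def
  proof (rule cSUP_least)
    show "{a<..T} \<noteq> {}" using aT by auto
    fix s assume s: "s \<in> {a<..T}"
    have "\<bar>(\<phi> s - \<phi> a) powr (1 - \<sigma>) * (u s - v s)\<bar> = y s"
      by (simp add: y_def abs_mult)
    thus "\<bar>(\<phi> s - \<phi> a) powr (1 - \<sigma>) * (u s - v s)\<bar> \<le> D m * E" using final[OF s] by simp
  qed
  also have "D m * E \<le> ((\<delta>a / Gamma \<sigma> + X / Gamma (\<rho> + 1) * \<epsilon>f) + real m * (\<epsilon>J / Gamma \<sigma>))
                          * (1 + E / Gamma \<sigma>) ^ m * E"
    unfolding D_def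
    by (intro mult_right_mono Dseq_bound B00 E0) (use \<epsilon>J G\<sigma> in auto)
  also have "\<dots> = (\<delta>a / Gamma \<sigma> + real m * \<epsilon>J / Gamma \<sigma>
             + (\<phi> T - \<phi> a) powr (1 - \<sigma> + \<rho>) / Gamma (\<rho> + 1) * \<epsilon>f)
           * ((1 + mittag_leffler \<rho> ((\<phi> T - \<phi> a) powr (1 - \<sigma> + \<rho>)) / Gamma \<sigma>) ^ m
              * mittag_leffler \<rho> ((\<phi> T - \<phi> a) powr (1 - \<sigma> + \<rho>)))"
    by (simp add: E_def X_def algebra_simps)
  finally show ?thesis .
qed

end
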